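(* Let $j$ be a divisor of $n$ with $1\le j\le n-1$, and let $0\leq i\leq n-1$. If $\gcd(i,n)=\gcd(i,j)$, or $\gcd(i,n)$ divides $j$, then there exists $N\geq 0$ with $c_i^N\in R_jA$.
   Context: $\Bbbk$ is an algebraically closed field of characteristic zero, $n\ge2$, $A=\Bbbk_{-1}[x_0,\dots,x_{n-1}]$ is generated by degree-one $x_0,\dots,x_{n-1}$ with $x_ix_j=-x_jx_i$ ($i\ne j$), $C_n=\langle\sigma\rangle$ acts by $\sigma(x_i)=x_{i+1}$ (indices in $\mathbb{Z}_n$). Let $\omega$ be a primitive $n$th root of unity, $b_\gamma=\frac1n\sum_{i=0}^{n-1}\omega^{i\gamma}x_i$, and $c_k=b_lb_{k-l}+b_{k-l}b_l$ (independent of $l$) for $k\in\mathbb{Z}_n$. $R_j=\{a\in A\mid\sigma(a)=\omega^{-j}a\}$ and $R_jA$ is the right ideal of $A$ generated by $R_j$. Here $\gcd(0,n)=n$. *)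

theory Defs
  imports "HOL-Computational_Algebra.Polynomial"
begin

text \<open>The skew polynomial ring A = k_{-1}[x_0,...,x_{n-1}].
  An element is a coefficient function on exponent vectors (monomials)
  a :: nat => nat, where a stands for the ordered monomial
  x_0^(a 0) * ... * x_{n-1}^(a (n-1)).\<close>

definition skA :: "nat \<Rightarrow> ((nat \<Rightarrow> nat) \<Rightarrow> 'k::field) set" where
  "skA n = {f. finite {a. f a \<noteq> 0} \<and> (\<forall>a. f a \<noteq> 0 \<longrightarrow> (\<forall>i\<ge>n. a i = 0))}"

text \<open>Sign of x^a * x^b = (-1)^(sum_{i>j} a_i b_j) x^(a+b).\<close>
definition sksign :: "nat \<Rightarrow> (nat \<Rightarrow> nat) \<Rightarrow> (nat \<Rightarrow> nat) \<Rightarrow> 'k::field" where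
  "sksign n a b = (-1) ^ (\<Sum>i<n. \<Sum>j<i. a i * b j)"

definition skmul :: "nat \<Rightarrow> ((nat \<Rightarrow> nat) \<Rightarrow> 'k::field) \<Rightarrow> ((nat \<Rightarrow> nat) \<Rightarrow> 'k) \<Rightarrow> ((nat \<Rightarrow> nat) \<Rightarrow> 'k)" where
  "skmul n f g = (\<lambda>c. \<Sum>p \<in> {p. f (fst p) \<noteq> 0 \<and> g (snd p) \<noteq> 0 \<and> (\<lambda>i. fst p i + snd p i) = c}.
      sksign n (fst p) (snd p) * f (fst p) * g (snd p))"

definition skone :: "(nat \<Rightarrow> nat) \<Rightarrow> 'k::field" where
  "skone = (\<lambda>c. if c = (\<lambda>i. 0) then 1 else 0)"

definition skpow :: "nat \<Rightarrow> ((nat \<Rightarrow> nat) \<Rightarrow> 'k::field) \<Rightarrow> nat \<Rightarrow> ((nat \<Rightarrow> nat) \<Rightarrow> 'k)" where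
  "skpow n f N = (skmul n f ^^ N) skone"

definition skx :: "nat \<Rightarrow> (nat \<Rightarrow> nat) \<Rightarrow> 'k::field" where
  "skx i = (\<lambda>c. if c = (\<lambda>k. if k = i then 1 else 0) then 1 else 0)"

definition skb :: "nat \<Rightarrow> 'k::field \<Rightarrow> nat \<Rightarrow> (nat \<Rightarrow> nat) \<Rightarrow> 'k" where
  "skb n \<omega> \<gamma> = (\<lambda>c. inverse (of_nat n) * (\<Sum>i<n. \<omega> ^ (i * \<gamma>) * skx i c))"

text \<open>c_k = b_l b_{k-l} + b_{k-l} b_l, taken with l = 0.\<close>
definition skc :: "nat \<Rightarrow> 'k::field \<Rightarrow> nat \<Rightarrow> (nat \<Rightarrow> nat) \<Rightarrow> 'k" where
  "skc n \<omega> k = (\<lambda>c. skmul n (skb n \<omega> 0) (skb n \<omega> k) c + skmul n (skb n \<omega> k) (skb n \<omega> 0) c)"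

text \<open>The automorphism sigma(x_i) = x_{i+1 mod n}:
  sigma(x^a) = x_1^(a_0) ... x_{n-1}^(a_{n-2}) x_0^(a_{n-1})
             = (-1)^(a_{n-1} (a_0+...+a_{n-2})) x^(shift a).\<close>
definition sksigma :: "nat \<Rightarrow> ((nat \<Rightarrow> nat) \<Rightarrow> 'k::field) \<Rightarrow> ((nat \<Rightarrow> nat) \<Rightarrow> 'k)" where
  "sksigma n f = (\<lambda>c. if (\<forall>i\<ge>n. c i = 0)
      then (-1) ^ (c 0 * (\<Sum>i\<in>{1..<n}. c i)) * f (\<lambda>i. if i < n then c ((i + 1) mod n) else 0)
      else 0)"

definition skR :: "nat \<Rightarrow> 'k::field \<Rightarrow> nat \<Rightarrow> ((nat \<Rightarrow> nat) \<Rightarrow> 'k) set" where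
  "skR n \<omega> j = {a \<in> skA n. sksigma n a = (\<lambda>c. inverse (\<omega> ^ j) * a c)}"

definition skRideal :: "nat \<Rightarrow> ((nat \<Rightarrow> nat) \<Rightarrow> 'k::field) set \<Rightarrow> ((nat \<Rightarrow> nat) \<Rightarrow> 'k) set" where
  "skRideal n S = {f. \<exists>(m::nat) rs bs. (\<forall>k<m. rs k \<in> S \<and> bs k \<in> skA n) \<and>
       f = (\<lambda>c. \<Sum>k<m. skmul n (rs k) (bs k) c)}"

end

theory Submission
  imports Defs
begin


definition rot :: "nat \<Rightarrow> (nat \<Rightarrow> nat) \<Rightarrow> (nat \<Rightarrow> nat)" where
  "rot n c = (\<lambda>i. if i < n then c ((i + 1) mod n) else 0)"
definition rotinv :: "nat \<Rightarrow> (nat \<Rightarrow> nat) \<Rightarrow> (nat \<Rightarrow> nat)" where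
  "rotinv n c = (\<lambda>i. if i < n then c ((i + n - 1) mod n) else 0)"

definition supn :: "nat \<Rightarrow> (nat \<Rightarrow> nat) \<Rightarrow> bool" where
  "supn n c \<longleftrightarrow> (\<forall>i\<ge>n. c i = 0)"

lemma mod_aux1:
  fixes n i :: nat assumes "0 < n" "i < n" shows "((i + 1) mod n + n - 1) mod n = i"
proof (cases "i + 1 < n")
  case True
  then have "(i + 1) mod n = i + 1" by (rule mod_less)
  then have eq: "(i + 1) mod n + n - 1 = i + n" by simp
  have "(i + n) mod n = i" using assms(2) by simp
  then show ?thesis unfolding eq .
next
  case False
  then have "i + 1 = n" using assms by simp
  then have eq: "(i + 1) mod n + n - 1 = i" by simp
  show ?thesis unfolding eq using assms(2) by simp
qed

lemma mod_aux2:
  fixes n i :: nat assumes "0 < n" "i < n" shows "((i + n - 1) mod n + 1) mod n = i"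
proof (cases "i = 0")
  case True
  have "n - 1 < n" using assms by simp
  then have "(n - 1) mod n = n - 1" by (rule mod_less)
  then have eq: "(i + n - 1) mod n + 1 = n" using True assms by simp
  show ?thesis unfolding eq using True by simp
next
  case False
  then have e1: "i + n - 1 = (i - 1) + n" using assms by simp
  have "i - 1 < n" using assms by simp
  then have "((i - 1) + n) mod n = i - 1" by simp
  then have eq: "(i + n - 1) mod n + 1 = i" unfolding e1 using False by simp
  show ?thesis unfolding eq using assms(2) by simp
qed

lemma rotinv_rot: assumes "0 < n" "supn n c" shows "rotinv n (rot n c) = c"
proof
  fix i show "rotinv n (rot n c) i = c i"
  proof (cases "i < n")
    case True
    have "(i + n - 1) mod n < n" using assms by simp
    then show ?thesis using True mod_aux2[OF assms(1) True] unfolding rotinv_def rot_def by simp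
  next
    case False then show ?thesis using assms unfolding rotinv_def supn_def by simp
  qed
qed

lemma rot_rotinv: assumes "0 < n" "supn n c" shows "rot n (rotinv n c) = c"
proof
  fix i show "rot n (rotinv n c) i = c i"
  proof (cases "i < n")
    case True
    have "(i + 1) mod n < n" using assms by simp
    then show ?thesis using True mod_aux1[OF assms(1) True] unfolding rotinv_def rot_def by simp
  next
    case False then show ?thesis using assms unfolding rot_def supn_def by simp
  qed
qed

lemma supn_rot: "supn n (rot n c)" unfolding supn_def rot_def by auto
lemma supn_rotinv: "supn n (rotinv n c)" unfolding supn_def rotinv_def by auto

lemma rot_add: "rot n (\<lambda>i. a i + b i) = (\<lambda>i. rot n a i + rot n b i)"
  unfolding rot_def by auto
lemma rotinv_add: "rotinv n (\<lambda>i. a i + b i) = (\<lambda>i. rotinv n a i + rotinv n b i)"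
  unfolding rotinv_def by auto

lemma sksign_even: "(\<forall>k. even (a k)) \<Longrightarrow> sksign n a b = (1::'k::field)"
proof -
  assume "\<forall>k. even (a k)"
  then have "even (\<Sum>i<n. \<Sum>j<i. a i * b j)" by (auto intro!: dvd_sum)
  then show ?thesis unfolding sksign_def by simp
qed


definition EV :: "nat \<Rightarrow> ((nat \<Rightarrow> nat) \<Rightarrow> 'k::field) \<Rightarrow> bool" where
  "EV n f \<longleftrightarrow> f \<in> skA n \<and> (\<forall>a. f a \<noteq> 0 \<longrightarrow> (\<forall>k. even (a k)))"

definition Eig :: "nat \<Rightarrow> 'k::field \<Rightarrow> ((nat \<Rightarrow> nat) \<Rightarrow> 'k) \<Rightarrow> bool" where
  "Eig n \<mu> f \<longleftrightarrow> (\<forall>c. supn n c \<longrightarrow> f (rot n c) = \<mu> * f c)"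

lemma skA_supn: "f \<in> skA n \<Longrightarrow> f a \<noteq> 0 \<Longrightarrow> supn n a"
  unfolding skA_def supn_def by auto

lemma skmul_nonzero:
  assumes "skmul n f g c \<noteq> 0"
  obtains a b where "f a \<noteq> 0" "g b \<noteq> 0" "c = (\<lambda>i. a i + b i)"
proof -
  let ?Q = "{p. f (fst p) \<noteq> 0 \<and> g (snd p) \<noteq> 0 \<and> (\<lambda>i. fst p i + snd p i) = c}"
  have "?Q \<noteq> {}"
  proof
    assume "?Q = {}"
    then have "skmul n f g c = 0" unfolding skmul_def by (simp only: sum.empty)
    then show False using assms by simp
  qed
  then obtain p where "p \<in> ?Q" by blast
  then show ?thesis using that[of "fst p" "snd p"] by auto
qed

lemma skmul_EV:
  assumes "EV n f" "EV n g"
  shows "EV n (skmul n f g)"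
proof -
  have ff: "finite {a. f a \<noteq> 0}" and fg: "finite {a. g a \<noteq> 0}"
    using assms unfolding EV_def skA_def by auto
  have sub: "{c. skmul n f g c \<noteq> 0} \<subseteq> (\<lambda>p. (\<lambda>i. fst p i + snd p i)) ` ({a. f a \<noteq> 0} \<times> {a. g a \<noteq> 0})"
  proof
    fix c assume "c \<in> {c. skmul n f g c \<noteq> 0}"
    then obtain a b where "f a \<noteq> 0" "g b \<noteq> 0" "c = (\<lambda>i. a i + b i)"
      using skmul_nonzero by blast
    then show "c \<in> (\<lambda>p. (\<lambda>i. fst p i + snd p i)) ` ({a. f a \<noteq> 0} \<times> {a. g a \<noteq> 0})"
      by (auto intro!: image_eqI[of _ _ "(a, b)"])
  qed
  have fin: "finite {c. skmul n f g c \<noteq> 0}"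
    by (rule finite_subset[OF sub]) (use ff fg in auto)
  have z: "\<forall>c. skmul n f g c \<noteq> 0 \<longrightarrow> (\<forall>i\<ge>n. c i = 0)"
  proof (intro allI impI)
    fix c i assume "skmul n f g c \<noteq> 0" "n \<le> i"
    then obtain a b where "f a \<noteq> 0" "g b \<noteq> 0" "c = (\<lambda>i. a i + b i)"
      using skmul_nonzero by blast
    then show "c i = 0" using assms \<open>n \<le> i\<close> unfolding EV_def skA_def by auto
  qed
  have e: "\<forall>c. skmul n f g c \<noteq> 0 \<longrightarrow> (\<forall>k. even (c k))"
  proof (intro allI impI)
    fix c k assume "skmul n f g c \<noteq> 0"
    then obtain a b where "f a \<noteq> 0" "g b \<noteq> 0" "c = (\<lambda>i. a i + b i)"
      using skmul_nonzero by blast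
    then show "even (c k)" using assms unfolding EV_def by auto
  qed
  show ?thesis unfolding EV_def skA_def using fin z e by auto
qed

lemma skmul_Eig:
  assumes n: "0 < n" and "EV n f" "EV n g" "Eig n \<mu> f" "Eig n \<nu> g" "\<mu> \<noteq> 0" "\<nu> \<noteq> 0"
  shows "Eig n (\<mu> * \<nu>) (skmul n f g)"
  unfolding Eig_def
proof (intro allI impI)
  fix c assume sc: "supn n c"
  define Q where "Q c = {p. f (fst p) \<noteq> 0 \<and> g (snd p) \<noteq> 0 \<and> (\<lambda>i. fst p i + snd p i) = c}" for c
  define h where "h p = sksign n (fst p) (snd p) * f (fst p) * g (snd p)" for p
  define rp where "rp p = (rot n (fst p), rot n (snd p))" for p :: "(nat \<Rightarrow> nat) \<times> (nat \<Rightarrow> nat)"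
  have sm: "skmul n f g d = sum h (Q d)" for d unfolding skmul_def Q_def h_def by simp
  have fA: "f \<in> skA n" and gA: "g \<in> skA n" using assms unfolding EV_def by auto
  have fe: "f a \<noteq> 0 \<Longrightarrow> even (a k)" for a k using assms unfolding EV_def by auto
  have ge: "g a \<noteq> 0 \<Longrightarrow> even (a k)" for a k using assms unfolding EV_def by auto
  have fr: "supn n a \<Longrightarrow> f (rot n a) = \<mu> * f a" for a using assms unfolding Eig_def by auto
  have gr: "supn n a \<Longrightarrow> g (rot n a) = \<nu> * g a" for a using assms unfolding Eig_def by auto
  have img: "Q (rot n c) = rp ` Q c"
  proof
    show "Q (rot n c) \<subseteq> rp ` Q c"
    proof
      fix p assume p: "p \<in> Q (rot n c)"
      obtain a b where pab: "p = (a, b)" by (cases p)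
      have a0: "f a \<noteq> 0" and b0: "g b \<noteq> 0" and ab: "(\<lambda>i. a i + b i) = rot n c"
        using p pab unfolding Q_def by auto
      have sa: "supn n a" using skA_supn[OF fA a0] .
      have sb: "supn n b" using skA_supn[OF gA b0] .
      have "f a = f (rot n (rotinv n a))" using rot_rotinv[OF n sa] by simp
      also have "\<dots> = \<mu> * f (rotinv n a)" using fr[OF supn_rotinv] .
      finally have a1: "f (rotinv n a) \<noteq> 0" using a0 by auto
      have "g b = g (rot n (rotinv n b))" using rot_rotinv[OF n sb] by simp
      also have "\<dots> = \<nu> * g (rotinv n b)" using gr[OF supn_rotinv] .
      finally have b1: "g (rotinv n b) \<noteq> 0" using b0 by auto
      have "(\<lambda>i. rotinv n a i + rotinv n b i) = rotinv n (\<lambda>i. a i + b i)"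
        by (simp add: rotinv_add)
      also have "\<dots> = c" using ab rotinv_rot[OF n sc] by simp
      finally have "(rotinv n a, rotinv n b) \<in> Q c" using a1 b1 unfolding Q_def by auto
      moreover have "rp (rotinv n a, rotinv n b) = p"
        unfolding rp_def pab using rot_rotinv[OF n sa] rot_rotinv[OF n sb] by simp
      ultimately show "p \<in> rp ` Q c" by (metis imageI)
    qed
  next
    show "rp ` Q c \<subseteq> Q (rot n c)"
    proof
      fix p assume "p \<in> rp ` Q c"
      then obtain a b where ab: "(a, b) \<in> Q c" and pab: "p = rp (a, b)" by auto
      have a0: "f a \<noteq> 0" and b0: "g b \<noteq> 0" and s: "(\<lambda>i. a i + b i) = c"
        using ab unfolding Q_def by auto
      have "f (rot n a) \<noteq> 0" using fr[OF skA_supn[OF fA a0]] a0 assms(6) by simp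
      moreover have "g (rot n b) \<noteq> 0" using gr[OF skA_supn[OF gA b0]] b0 assms(7) by simp
      moreover have "(\<lambda>i. rot n a i + rot n b i) = rot n c" using s rot_add[of n a b] by simp
      ultimately show "p \<in> Q (rot n c)" unfolding pab rp_def Q_def by simp
    qed
  qed
  have inj: "inj_on rp (Q c)"
  proof
    fix p q assume p: "p \<in> Q c" and q: "q \<in> Q c" and e: "rp p = rp q"
    have "supn n (fst p)" "supn n (snd p)" "supn n (fst q)" "supn n (snd q)"
      using p q skA_supn[OF fA] skA_supn[OF gA] unfolding Q_def by auto
    then show "p = q" using e rotinv_rot[OF n] unfolding rp_def
      by (metis prod.expand prod.inject)
  qed
  have hv: "h (rp p) = (\<mu> * \<nu>) * h p" if p: "p \<in> Q c" for p
  proof -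
    obtain a b where pab: "p = (a, b)" by (cases p)
    have a0: "f a \<noteq> 0" and b0: "g b \<noteq> 0" using p pab unfolding Q_def by auto
    have ra: "f (rot n a) = \<mu> * f a" using fr[OF skA_supn[OF fA a0]] .
    have rb: "g (rot n b) = \<nu> * g b" using gr[OF skA_supn[OF gA b0]] .
    have "f (rot n a) \<noteq> 0" using ra a0 assms(6) by simp
    then have s1: "sksign n (rot n a) (rot n b) = (1::'a)" using fe by (intro sksign_even) auto
    have s2: "sksign n a b = (1::'a)" using fe a0 by (intro sksign_even) auto
    show ?thesis unfolding h_def pab rp_def using s1 s2 ra rb by (simp add: algebra_simps)
  qed
  have "skmul n f g (rot n c) = sum h (rp ` Q c)" using sm img by simp
  also have "\<dots> = sum (h \<circ> rp) (Q c)" using sum.reindex[OF inj] .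
  also have "\<dots> = sum (\<lambda>p. (\<mu> * \<nu>) * h p) (Q c)" using hv by (intro sum.cong) auto
  also have "\<dots> = (\<mu> * \<nu>) * skmul n f g c" by (simp add: sm sum_distrib_left)
  finally show "skmul n f g (rot n c) = \<mu> * \<nu> * skmul n f g c" .
qed


lemma sigma_eig:
  assumes n: "0 < n" and "EV n f" "Eig n \<mu> f"
  shows "sksigma n f = (\<lambda>c. \<mu> * f c)"
proof
  fix c
  have fA: "f \<in> skA n" using assms unfolding EV_def by auto
  show "sksigma n f c = \<mu> * f c"
  proof (cases "\<forall>i\<ge>n. c i = 0")
    case True
    then have sc: "supn n c" unfolding supn_def .
    have fr: "f (rot n c) = \<mu> * f c" using assms sc unfolding Eig_def by auto
    have eq: "sksigma n f c = (-1) ^ (c 0 * (\<Sum>i\<in>{1..<n}. c i)) * f (rot n c)"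
      unfolding sksigma_def rot_def using True by simp
    show ?thesis
    proof (cases "f (rot n c) = 0")
      case True then show ?thesis using eq fr by simp
    next
      case False
      then have "even (rot n c (n - 1))" using assms unfolding EV_def by auto
      moreover have "rot n c (n - 1) = c 0" unfolding rot_def using n by simp
      ultimately have "even (c 0 * (\<Sum>i\<in>{1..<n}. c i))" by simp
      then show ?thesis using eq fr by simp
    qed
  next
    case False
    then have "f c = 0" using fA unfolding skA_def by auto
    then show ?thesis unfolding sksigma_def using False by (subst if_not_P) auto
  qed
qed

lemma skone_EV: "EV n (skone :: (nat \<Rightarrow> nat) \<Rightarrow> 'k::field)"
  unfolding EV_def skA_def skone_def by auto

lemma skone_Eig: assumes n: "0 < n" shows "Eig n 1 (skone :: (nat \<Rightarrow> nat) \<Rightarrow> 'k::field)"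
  unfolding Eig_def
proof (intro allI impI)
  fix c assume sc: "supn n c"
  have "rot n c = (\<lambda>i. 0) \<longleftrightarrow> c = (\<lambda>i. 0)"
  proof
    assume "rot n c = (\<lambda>i. 0)"
    then have "rotinv n (rot n c) = rotinv n (\<lambda>i. 0)" by simp
    then show "c = (\<lambda>i. 0)" using rotinv_rot[OF n sc] unfolding rotinv_def by auto
  next
    assume "c = (\<lambda>i. 0)" then show "rot n c = (\<lambda>i. 0)" unfolding rot_def by auto
  qed
  then show "skone (rot n c) = (1::'k) * skone c" unfolding skone_def by simp
qed

lemma skmul_one_right:
  assumes "f \<in> skA n"
  shows "skmul n f skone = f"
proof
  fix c
  have Q: "{p. f (fst p) \<noteq> 0 \<and> skone (snd p) \<noteq> (0::'a) \<and> (\<lambda>i. fst p i + snd p i) = c}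
      = (if f c \<noteq> 0 then {(c, \<lambda>i. 0)} else {})"
    unfolding skone_def by auto
  show "skmul n f skone c = f c"
    unfolding skmul_def Q by (simp add: sksign_def skone_def)
qed

lemma skpow_Suc: "skpow n f (Suc N) = skmul n f (skpow n f N)"
  unfolding skpow_def by simp

lemma skpow_EV_Eig:
  assumes n: "0 < n" and "EV n f" "Eig n \<mu> f" "\<mu> \<noteq> 0"
  shows "EV n (skpow n f N) \<and> Eig n (\<mu> ^ N) (skpow n f N)"
proof (induction N)
  case 0
  have "EV n (skone :: (nat \<Rightarrow> nat) \<Rightarrow> 'a)" by (rule skone_EV)
  moreover have "Eig n (1::'a) skone" by (rule skone_Eig[OF n])
  ultimately show ?case unfolding skpow_def by simp
next
  case (Suc N)
  then show ?case using skmul_EV[OF assms(2)] skmul_Eig[OF n assms(2) _ assms(3) _ assms(4)]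
    using assms(4) by (simp add: skpow_Suc)
qed



definition ee :: "nat \<Rightarrow> nat \<Rightarrow> nat" where "ee a = (\<lambda>t. if t = a then 1 else 0)"

lemma ee_inj: "ee a = ee b \<longleftrightarrow> a = b"
proof
  assume "ee a = ee b" then have "ee a a = ee b a" by simp
  then show "a = b" unfolding ee_def by (auto split: if_splits)
qed simp

lemma skx_ee: "skx i = (\<lambda>c. if c = ee i then 1 else 0)" unfolding skx_def ee_def by simp

lemma skmul_fin:
  assumes "finite S" "finite T" "{a. f a \<noteq> 0} \<subseteq> S" "{b. g b \<noteq> 0} \<subseteq> T"
  shows "skmul n f g c = (\<Sum>a\<in>S. \<Sum>b\<in>T. if (\<lambda>i. a i + b i) = c then sksign n a b * f a * g b else 0)"
proof -
  have "skmul n f g c = (\<Sum>p\<in>S \<times> T. if (\<lambda>i. fst p i + snd p i) = c then sksign n (fst p) (snd p) * f (fst p) * g (snd p) else 0)"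
    unfolding skmul_def
    by (rule sum.mono_neutral_cong_left) (use assms in auto)
  also have "\<dots> = (\<Sum>a\<in>S. \<Sum>b\<in>T. if (\<lambda>i. a i + b i) = c then sksign n a b * f a * g b else 0)"
    by (subst sum.cartesian_product) (simp add: case_prod_beta)
  finally show ?thesis .
qed

lemma skb_supp: "{c. skb n \<omega> \<gamma> c \<noteq> 0} \<subseteq> ee ` {..<n}"
proof
  fix c assume "c \<in> {c. skb n \<omega> \<gamma> c \<noteq> 0}"
  then have "(\<Sum>i<n. \<omega> ^ (i * \<gamma>) * skx i c) \<noteq> 0" unfolding skb_def by auto
  then obtain i where "i \<in> {..<n}" "\<omega> ^ (i * \<gamma>) * skx i c \<noteq> 0"
    by (rule sum.not_neutral_contains_not_neutral)
  then have "i < n" "skx i c \<noteq> (0::'a)" by auto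
  then have "c = ee i" unfolding skx_ee by (cases "c = ee i") auto
  then show "c \<in> ee ` {..<n}" using \<open>i < n\<close> by auto
qed

lemma skb_ee: "a < n \<Longrightarrow> skb n \<omega> \<gamma> (ee a) = inverse (of_nat n) * \<omega> ^ (a * \<gamma>)"
  unfolding skb_def skx_ee by (simp add: ee_inj if_distrib cong: if_cong)

lemma sksign_ee:
  assumes "a < n" "b < n"
  shows "sksign n (ee a) (ee b) = (if b < a then -1 else (1::'k::field))"
proof -
  have "(\<Sum>i<n. \<Sum>j<i. ee a i * ee b j) = (\<Sum>i<n. if i = a then (if b < a then 1 else 0) else 0)"
    by (rule sum.cong) (auto simp: ee_def)
  also have "\<dots> = (if b < a then 1 else 0)" using assms by (simp only: sum.delta finite_lessThan lessThan_iff if_True)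
  finally show ?thesis unfolding sksign_def by simp
qed


lemma skmul_bb:
  "skmul n (skb n \<omega> \<gamma>) (skb n \<omega> \<delta>) c =
   (\<Sum>a<n. \<Sum>b<n. if (\<lambda>i. ee a i + ee b i) = c then
      (if b < a then -1 else 1) * (inverse (of_nat n) * \<omega> ^ (a * \<gamma>)) * (inverse (of_nat n) * \<omega> ^ (b * \<delta>)) else 0)"
proof -
  have inj: "inj_on ee {..<n}" using ee_inj by (auto intro: inj_onI)
  have "skmul n (skb n \<omega> \<gamma>) (skb n \<omega> \<delta>) c =
     (\<Sum>x\<in>ee ` {..<n}. \<Sum>y\<in>ee ` {..<n}. if (\<lambda>i. x i + y i) = c then sksign n x y * skb n \<omega> \<gamma> x * skb n \<omega> \<delta> y else 0)"
    by (rule skmul_fin) (auto simp: skb_supp)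
  also have "\<dots> = (\<Sum>a<n. \<Sum>b<n. if (\<lambda>i. ee a i + ee b i) = c then sksign n (ee a) (ee b) * skb n \<omega> \<gamma> (ee a) * skb n \<omega> \<delta> (ee b) else 0)"
    by (simp add: sum.reindex[OF inj])
  also have "\<dots> = (\<Sum>a<n. \<Sum>b<n. if (\<lambda>i. ee a i + ee b i) = c then
      (if b < a then -1 else 1) * (inverse (of_nat n) * \<omega> ^ (a * \<gamma>)) * (inverse (of_nat n) * \<omega> ^ (b * \<delta>)) else 0)"
    by (intro sum.cong refl) (simp add: sksign_ee skb_ee)
  finally show ?thesis .
qed

definition Cf :: "nat \<Rightarrow> 'k::field \<Rightarrow> nat \<Rightarrow> (nat \<Rightarrow> nat) \<Rightarrow> 'k" where
  "Cf n \<omega> k = (\<lambda>c. \<Sum>a<n. if (\<lambda>t. if t = a then 2 else 0) = c then 2 * inverse (of_nat n) ^ 2 * \<omega> ^ (a * k) else 0)"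

lemma char0_self_neg:
  fixes X :: "'k::field_char_0" assumes "X = - X" shows "X = 0"
proof -
  have "X + X = 0" using assms by (metis add.right_inverse)
  then have "(2::'k) * X = 0" by (metis mult_2)
  then show ?thesis by simp
qed

lemma skc_Cf:
  fixes \<omega> :: "'k::field_char_0"
  shows "skc n \<omega> k = Cf n \<omega> k"
proof
  fix c
  define Nn where "Nn = inverse (of_nat n :: 'k)"
  define P where "P a b \<longleftrightarrow> (\<lambda>i. ee a i + ee b i) = c" for a b
  define s where "s a b = (if b < a then -1 else (1::'k))" for a b :: nat
  define W where "W a b = (if P a b then Nn ^ 2 * (\<omega> ^ (b * k) + \<omega> ^ (a * k)) else 0)" for a b
  have Ws: "W b a = W a b" for a b unfolding W_def P_def by (simp add: add.commute)
  have ss: "a \<noteq> b \<Longrightarrow> s b a = - s a b" for a b unfolding s_def by auto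
  have "skc n \<omega> k c = (\<Sum>a<n. \<Sum>b<n. (if P a b then s a b * (Nn * \<omega> ^ (a * 0)) * (Nn * \<omega> ^ (b * k)) else 0)
      + (if P a b then s a b * (Nn * \<omega> ^ (a * k)) * (Nn * \<omega> ^ (b * 0)) else 0))"
    unfolding skc_def skmul_bb P_def s_def Nn_def by (simp only: sum.distrib)
  also have "\<dots> = (\<Sum>a<n. \<Sum>b<n. s a b * W a b)"
  proof (intro sum.cong refl)
    fix a b
    show "(if P a b then s a b * (Nn * \<omega> ^ (a * 0)) * (Nn * \<omega> ^ (b * k)) else 0)
      + (if P a b then s a b * (Nn * \<omega> ^ (a * k)) * (Nn * \<omega> ^ (b * 0)) else 0) = s a b * W a b"
      unfolding W_def by (cases "P a b") (simp_all add: algebra_simps power2_eq_square)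
  qed
  also have "\<dots> = (\<Sum>a<n. \<Sum>b<n. (if a = b then W a b else 0) + (if a \<noteq> b then s a b * W a b else 0))"
    by (intro sum.cong refl) (simp add: s_def)
  also have "\<dots> = (\<Sum>a<n. W a a) + (\<Sum>a<n. \<Sum>b<n. if a \<noteq> b then s a b * W a b else 0)"
    by (simp add: sum.distrib sum.delta)
  also have "\<dots> = (\<Sum>a<n. W a a)"
  proof -
  have "(\<Sum>a<n. \<Sum>b<n. if a \<noteq> b then s a b * W a b else 0) = 0"
  proof -
    define X where "X = (\<Sum>a<n. \<Sum>b<n. if a \<noteq> b then s a b * W a b else 0)"
    have "X = (\<Sum>b<n. \<Sum>a<n. if a \<noteq> b then s a b * W a b else 0)"
      unfolding X_def by (rule sum.swap)
    also have "\<dots> = (\<Sum>b<n. \<Sum>a<n. - (if b \<noteq> a then s b a * W b a else 0))"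
    proof (intro sum.cong refl)
      fix b a
      show "(if a \<noteq> b then s a b * W a b else 0) = - (if b \<noteq> a then s b a * W b a else 0)"
      proof (cases "a = b")
        case True then show ?thesis by simp
      next
        case False
        have "s b a * W b a = - (s a b * W a b)" using ss[OF False] Ws[of a b] by simp
        then show ?thesis using False by simp
      qed
    qed
    also have "\<dots> = - X" unfolding X_def by (simp add: sum_negf)
    finally have "X = - X" .
    then have "X = 0" by (rule char0_self_neg)
    then show ?thesis unfolding X_def .
  qed
  then show ?thesis by simp
  qed
  also have "\<dots> = Cf n \<omega> k c"
  proof -
    have "(\<lambda>i. ee a i + ee a i) = (\<lambda>t. if t = a then 2 else 0)" for a
      unfolding ee_def by auto
    then show ?thesis unfolding Cf_def W_def P_def Nn_def by (intro sum.cong refl) simp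
  qed
  finally show "skc n \<omega> k c = Cf n \<omega> k c" by simp
qed



definition TT :: "nat \<Rightarrow> nat \<Rightarrow> nat" where "TT a = (\<lambda>t. if t = a then 2 else 0)"

lemma Cf_TT: "Cf n \<omega> k = (\<lambda>c. \<Sum>a<n. if TT a = c then 2 * inverse (of_nat n) ^ 2 * \<omega> ^ (a * k) else 0)"
  unfolding Cf_def TT_def by simp

lemma Cf_nonzero:
  assumes "Cf n \<omega> k c \<noteq> 0" obtains a where "a < n" "c = TT a"
proof -
  from assms have "(\<Sum>a<n. if TT a = c then 2 * inverse (of_nat n) ^ 2 * \<omega> ^ (a * k) else 0) \<noteq> 0"
    unfolding Cf_TT by simp
  then obtain a where "a \<in> {..<n}" "(if TT a = c then 2 * inverse (of_nat n) ^ 2 * \<omega> ^ (a * k) else 0) \<noteq> 0"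
    by (rule sum.not_neutral_contains_not_neutral)
  then show ?thesis using that by (cases "TT a = c") auto
qed

lemma Cf_EV: "EV n (Cf n \<omega> k)"
proof -
  have sub: "{c. Cf n \<omega> k c \<noteq> 0} \<subseteq> TT ` {..<n}"
    using Cf_nonzero by blast
  have fin: "finite {c. Cf n \<omega> k c \<noteq> 0}" by (rule finite_subset[OF sub]) simp
  have "\<forall>c. Cf n \<omega> k c \<noteq> 0 \<longrightarrow> (\<forall>i\<ge>n. c i = 0)"
    by (metis Cf_nonzero TT_def not_le)
  moreover have "\<forall>c. Cf n \<omega> k c \<noteq> 0 \<longrightarrow> (\<forall>i. even (c i))"
    by (metis Cf_nonzero TT_def even_numeral even_zero)
  ultimately show ?thesis unfolding EV_def skA_def using fin by auto
qed

lemma pow_mod_n: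
  fixes \<omega> :: "'k::field"
  assumes "\<omega> ^ n = 1" shows "\<omega> ^ (m mod n) = \<omega> ^ m"
proof -
  have "\<omega> ^ m = \<omega> ^ (n * (m div n) + m mod n)" by simp
  also have "\<dots> = (\<omega> ^ n) ^ (m div n) * \<omega> ^ (m mod n)" by (simp only: power_add power_mult)
  finally show ?thesis using assms by simp
qed

lemma succ_mod_inj:
  fixes n :: nat assumes "0 < n" "a < n" "b < n" "(a + 1) mod n = (b + 1) mod n" shows "a = b"
  using mod_aux1[OF assms(1) assms(2)] mod_aux1[OF assms(1) assms(3)] assms(4) by metis

lemma rot_TT:
  assumes n: "0 < n" and a: "a < n"
  shows "rot n (TT ((a + 1) mod n)) = TT a"
proof
  fix i
  show "rot n (TT ((a + 1) mod n)) i = TT a i"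
  proof (cases "i < n")
    case True
    have "(i + 1) mod n = (a + 1) mod n \<longleftrightarrow> i = a"
      using succ_mod_inj[OF n True a] by auto
    then show ?thesis unfolding rot_def TT_def using True by simp
  next
    case False then show ?thesis unfolding rot_def TT_def using a by simp
  qed
qed

lemma supn_TT: "a < n \<Longrightarrow> supn n (TT a)" unfolding supn_def TT_def by auto

lemma TT_rot_iff:
  assumes n: "0 < n" and a: "a < n" and sc: "supn n c"
  shows "TT a = rot n c \<longleftrightarrow> TT ((a + 1) mod n) = c"
proof
  assume h: "TT ((a + 1) mod n) = c"
  then show "TT a = rot n c" using rot_TT[OF n a] by simp
next
  assume h: "TT a = rot n c"
  have b: "(a + 1) mod n < n" using n by simp
  have "c = rotinv n (rot n c)" using rotinv_rot[OF n sc] by simp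
  also have "\<dots> = rotinv n (rot n (TT ((a + 1) mod n)))" using h rot_TT[OF n a] by simp
  also have "\<dots> = TT ((a + 1) mod n)" using rotinv_rot[OF n supn_TT[OF b]] .
  finally show "TT ((a + 1) mod n) = c" by simp
qed

lemma Cf_Eig:
  fixes \<omega> :: "'k::field"
  assumes n: "0 < n" and w: "\<omega> ^ n = 1"
  shows "Eig n (\<omega> ^ ((n - 1) * k)) (Cf n \<omega> k)"
  unfolding Eig_def
proof (intro allI impI)
  fix c assume sc: "supn n c"
  define K where "K = 2 * inverse (of_nat n :: 'k) ^ 2"
  define G where "G b = (if TT b = c then K * \<omega> ^ (((b + n - 1) mod n) * k) else 0)" for b
  define sf where "sf a = (a + 1) mod n" for a
  have bij: "bij_betw sf {..<n} {..<n}"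
    unfolding bij_betw_def
  proof
    show "inj_on sf {..<n}"
    proof (rule inj_onI)
      fix x y assume "x \<in> {..<n}" "y \<in> {..<n}" "sf x = sf y"
      then show "x = y" unfolding sf_def using succ_mod_inj[OF n, of x y] by simp
    qed
    show "sf ` {..<n} = {..<n}"
    proof
      show "sf ` {..<n} \<subseteq> {..<n}" unfolding sf_def using n by auto
      show "{..<n} \<subseteq> sf ` {..<n}"
      proof
        fix b assume "b \<in> {..<n}"
        then have "sf ((b + n - 1) mod n) = b" "(b + n - 1) mod n < n"
          unfolding sf_def using mod_aux2[OF n] n by auto
        then show "b \<in> sf ` {..<n}" by (metis imageI lessThan_iff)
      qed
    qed
  qed
  have "Cf n \<omega> k (rot n c) = (\<Sum>a<n. if TT a = rot n c then K * \<omega> ^ (a * k) else 0)"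
    unfolding Cf_TT K_def by simp
  also have "\<dots> = (\<Sum>a<n. G (sf a))"
  proof (intro sum.cong refl)
    fix a assume "a \<in> {..<n}"
    then have a: "a < n" by simp
    have "((a + 1) mod n + n - 1) mod n = a" using mod_aux1[OF n a] .
    then show "(if TT a = rot n c then K * \<omega> ^ (a * k) else 0) = G (sf a)"
      unfolding G_def sf_def using TT_rot_iff[OF n a sc] by simp
  qed
  also have "\<dots> = (\<Sum>b<n. G b)" using sum.reindex_bij_betw[OF bij] .
  also have "\<dots> = (\<Sum>b<n. \<omega> ^ ((n - 1) * k) * (if TT b = c then K * \<omega> ^ (b * k) else 0))"
  proof (intro sum.cong refl)
    fix b
    have "\<omega> ^ (((b + n - 1) mod n) * k) = (\<omega> ^ ((b + n - 1) mod n)) ^ k" by (simp add: power_mult)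
    also have "\<dots> = (\<omega> ^ (b + n - 1)) ^ k" using pow_mod_n[OF w] by simp
    also have "\<dots> = (\<omega> ^ (n - 1) * \<omega> ^ b) ^ k"
    proof -
      have "b + n - 1 = (n - 1) + b" using n by simp
      then show ?thesis by (simp only: power_add)
    qed
    also have "\<dots> = \<omega> ^ ((n - 1) * k) * \<omega> ^ (b * k)" by (simp add: power_mult power_mult_distrib)
    finally have "\<omega> ^ (((b + n - 1) mod n) * k) = \<omega> ^ ((n - 1) * k) * \<omega> ^ (b * k)" .
    then show "G b = \<omega> ^ ((n - 1) * k) * (if TT b = c then K * \<omega> ^ (b * k) else 0)"
      unfolding G_def by (cases "TT b = c") (simp_all add: mult_ac)
  qed
  also have "\<dots> = \<omega> ^ ((n - 1) * k) * Cf n \<omega> k c"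
    unfolding Cf_TT K_def by (simp add: sum_distrib_left)
  finally show "Cf n \<omega> k (rot n c) = \<omega> ^ ((n - 1) * k) * Cf n \<omega> k c" .
qed



theorem lemma5p4:
  fixes \<omega> :: "'k::field_char_0" and n i j :: nat
  assumes alg_closed: "\<forall>p :: 'k poly. degree p > 0 \<longrightarrow> (\<exists>x. poly p x = 0)"
    and n2: "n \<ge> 2"
    and prim: "\<omega> ^ n = 1" "\<forall>k. 0 < k \<and> k < n \<longrightarrow> \<omega> ^ k \<noteq> 1"
    and jdvd: "j dvd n" and j1: "1 \<le> j" and jn: "j \<le> n - 1"
    and i_lt: "i < n"
    and hyp: "gcd i n = gcd i j \<or> gcd i n dvd j"
  shows "\<exists>N. skpow n (skc n \<omega> i) N \<in> skRideal n (skR n \<omega> j)"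
proof -
  have n: "0 < n" using n2 by simp
  have w0: "\<omega> \<noteq> 0" using prim(1) n by (metis power_0_left zero_neq_one gr_implies_not0)
  have gdvd: "gcd i n dvd j" using hyp by auto
  have i0: "i \<noteq> 0"
  proof
    assume "i = 0"
    then have "n dvd j" using gdvd by simp
    then show False using j1 jn n by (metis dvd_imp_le le_trans not_one_le_zero diff_less less_numeral_extra(1) not_le)
  qed
  obtain t where t: "j = gcd i n * t" using gdvd by blast
  obtain x y where xy: "i * x = n * y + gcd i n" using bezout_nat[OF i0] by blast
  define N where "N = x * t"
  have iN: "i * N = n * (y * t) + j" unfolding N_def t
    using arg_cong[OF xy, of "\<lambda>z. z * t"] by (simp add: algebra_simps)
  have wiN: "\<omega> ^ (i * N) = \<omega> ^ j"
    unfolding iN by (simp add: power_add power_mult prim(1))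
  define \<mu> where "\<mu> = \<omega> ^ ((n - 1) * i)"
  have \<mu>i: "\<mu> * \<omega> ^ i = 1"
  proof -
    have "\<mu> * \<omega> ^ i = \<omega> ^ ((n - 1) * i + i)" unfolding \<mu>_def by (simp add: power_add)
    also have "(n - 1) * i + i = n * i" using n by (simp add: algebra_simps)
    also have "\<omega> ^ (n * i) = 1" by (simp add: power_mult prim(1))
    finally show ?thesis .
  qed
  then have \<mu>inv: "\<mu> = inverse (\<omega> ^ i)" by (metis inverse_unique mult.commute)
  have \<mu>0: "\<mu> \<noteq> 0" using \<mu>inv w0 by simp
  have \<mu>N: "\<mu> ^ N = inverse (\<omega> ^ j)"
    unfolding \<mu>inv by (simp add: power_inverse wiN[symmetric] power_mult)
  define f where "f = skc n \<omega> i"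
  have fEV: "EV n f" unfolding f_def skc_Cf by (rule Cf_EV)
  have fEig: "Eig n \<mu> f" unfolding f_def skc_Cf \<mu>_def by (rule Cf_Eig[OF n prim(1)])
  define P where "P = skpow n f N"
  have PP: "EV n P \<and> Eig n (\<mu> ^ N) P" unfolding P_def by (rule skpow_EV_Eig[OF n fEV fEig \<mu>0])
  have PA: "P \<in> skA n" using PP unfolding EV_def by auto
  have "sksigma n P = (\<lambda>c. \<mu> ^ N * P c)" using sigma_eig[OF n] PP by auto
  then have PR: "P \<in> skR n \<omega> j" unfolding skR_def using PA \<mu>N by simp
  have oneA: "skone \<in> skA n" using skone_EV unfolding EV_def by auto
  have "P = (\<lambda>c. \<Sum>k<(1::nat). skmul n ((\<lambda>_. P) k) ((\<lambda>_. skone) k) c)"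
    using skmul_one_right[OF PA] by simp
  then have eq: "P = (\<lambda>c. \<Sum>k<(1::nat). skmul n P skone c)" by simp
  have "P \<in> skRideal n (skR n \<omega> j)"
    unfolding skRideal_def mem_Collect_eq
    by (rule exI[of _ "1::nat"], rule exI[of _ "\<lambda>_::nat. P"], rule exI[of _ "\<lambda>_::nat. skone"])
       (use PR oneA eq in simp)
  then show ?thesis unfolding P_def f_def by blast
qed


end
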